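(* Suppose that $A$ and $B$ are Gram mates and $\mathrm{rank}(A-B)=1$. If the remaining matrix of $A$ and $B$ is fixable, then $A$ is isomorphic to $B$.
   Context: Two $(0,1)$ matrices $A\neq B$ are Gram mates if $AA^T=BB^T$ and $A^TA=B^TB$; they are isomorphic if $B=PAQ$ for permutation matrices $P,Q$. If $A,B$ are Gram mates with $\mathrm{rank}(A-B)=1$, then after permuting rows and columns one may write $A=\begin{bmatrix} 0 & J_{k_1,k_2} & X_1\\ J_{k_1,k_2} & 0 & X_2\\ X_3 & X_4 & Y\end{bmatrix}$, $B=\begin{bmatrix} J_{k_1,k_2} & 0 & X_1\\ 0 & J_{k_1,k_2} & X_2\\ X_3 & X_4 & Y\end{bmatrix}$ with $k_1,k_2>0$, $\mathbf{1}^TX_1=\mathbf{1}^TX_2$, $X_3\mathbf{1}=X_4\mathbf{1}$, where $J_{p,q}$ is the $p\times q$ all-ones matrix; $Y$ (the submatrix on rows and columns where $A-B$ is zero) is the remaining matrix of $A$ and $B$. For $(0,1)$ matrices $Z_1,Z_2$ of equal size, $\mathcal R_{Z_1,Z_2}$ is the set of triples $(P_1,P_2,Q)$ of permutation matrices with $Z_2=P_1Z_1Q$ and $Z_1=P_2Z_2Q$, and $\mathcal L_{Z_1,Z_2}$ is the set of triples $(P,Q_1,Q_2)$ of permutation matrices with $Z_1=PZ_1Q_1$ and $Z_2=PZ_2Q_2$. $Y$ is fixable if there exist permutation matrices $P,Q$ with $Y=PYQ$ such that either (i) $(P_1,P_2,Q)\in\mathcal R_{X_1,X_2}$ and $(P,Q_3,Q_4)\in\mathcal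 L_{X_3,X_4}$ for some $P_1,P_2,Q_3,Q_4$, or (ii) $(Q_3,Q_4,P^T)\in\mathcal R_{X_3^T,X_4^T}$ and $(Q^T,P_1,P_2)\in\mathcal L_{X_1^T,X_2^T}$ for some $P_1,P_2,Q_3,Q_4$. *)

theory Defs
  imports "Jordan_Normal_Form.DL_Rank" "HOL-Combinatorics.Permutations"
begin

definition zero_one_mat :: "real mat \<Rightarrow> bool" where
  "zero_one_mat A \<longleftrightarrow> (\<forall>i < dim_row A. \<forall>j < dim_col A. A $$ (i,j) = 0 \<or> A $$ (i,j) = 1)"

definition perm_mat :: "nat \<Rightarrow> (nat \<Rightarrow> nat) \<Rightarrow> real mat" where
  "perm_mat n p = mat n n (\<lambda>(i,j). if p i = j then 1 else 0)"

definition is_perm_mat :: "nat \<Rightarrow> real mat \<Rightarrow> bool" where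
  "is_perm_mat n P \<longleftrightarrow> (\<exists>p. p permutes {..<n} \<and> P = perm_mat n p)"

definition gram_mates :: "real mat \<Rightarrow> real mat \<Rightarrow> bool" where
  "gram_mates A B \<longleftrightarrow> zero_one_mat A \<and> zero_one_mat B \<and>
     dim_row A = dim_row B \<and> dim_col A = dim_col B \<and> A \<noteq> B \<and>
     A * A\<^sup>T = B * B\<^sup>T \<and> A\<^sup>T * A = B\<^sup>T * B"

definition mat_isomorphic :: "real mat \<Rightarrow> real mat \<Rightarrow> bool" where
  "mat_isomorphic A B \<longleftrightarrow> (\<exists>P Q. is_perm_mat (dim_row A) P \<and> is_perm_mat (dim_col A) Q \<and>
     B = P * A * Q)"

definition mat_rank :: "real mat \<Rightarrow> nat" where
  "mat_rank M = vec_space.rank (dim_row M) M"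

definition R_set :: "real mat \<Rightarrow> real mat \<Rightarrow> (real mat \<times> real mat \<times> real mat) set" where
  "R_set Z1 Z2 = {(P1,P2,Q). is_perm_mat (dim_row Z1) P1 \<and> is_perm_mat (dim_row Z1) P2 \<and>
     is_perm_mat (dim_col Z1) Q \<and> Z2 = P1 * Z1 * Q \<and> Z1 = P2 * Z2 * Q}"

definition L_set :: "real mat \<Rightarrow> real mat \<Rightarrow> (real mat \<times> real mat \<times> real mat) set" where
  "L_set Z1 Z2 = {(P,Q1,Q2). is_perm_mat (dim_row Z1) P \<and> is_perm_mat (dim_col Z1) Q1 \<and>
     is_perm_mat (dim_col Z1) Q2 \<and> Z1 = P * Z1 * Q1 \<and> Z2 = P * Z2 * Q2}"

definition fixable :: "real mat \<Rightarrow> real mat \<Rightarrow> real mat \<Rightarrow> real mat \<Rightarrow> real mat \<Rightarrow> bool" where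
  "fixable X1 X2 X3 X4 Y \<longleftrightarrow>
     (\<exists>P Q. is_perm_mat (dim_row Y) P \<and> is_perm_mat (dim_col Y) Q \<and> Y = P * Y * Q \<and>
       ((\<exists>P1 P2 Q3 Q4. (P1,P2,Q) \<in> R_set X1 X2 \<and> (P,Q3,Q4) \<in> L_set X3 X4) \<or>
        (\<exists>P1 P2 Q3 Q4. (Q3,Q4,P\<^sup>T) \<in> R_set X3\<^sup>T X4\<^sup>T \<and> (Q\<^sup>T,P1,P2) \<in> L_set X1\<^sup>T X2\<^sup>T)))"

text \<open>The block matrices
  A = [[0, J, X1],[J, 0, X2],[X3, X4, Y]] and B = [[J, 0, X1],[0, J, X2],[X3, X4, Y]],
  with J = J_{k1,k2}; rows: k1, k1, dim_row Y; columns: k2, k2, dim_col Y.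
  The flag a selects A (True) or B (False).\<close>
definition block_mat3 :: "bool \<Rightarrow> nat \<Rightarrow> nat \<Rightarrow> real mat \<Rightarrow> real mat \<Rightarrow> real mat \<Rightarrow> real mat \<Rightarrow> real mat \<Rightarrow> real mat" where
  "block_mat3 a k1 k2 X1 X2 X3 X4 Y = mat (2*k1 + dim_row Y) (2*k2 + dim_col Y) (\<lambda>(i,j).
     if i < k1 then (if j < k2 then (if a then 0 else 1) else if j < 2*k2 then (if a then 1 else 0)
                     else X1 $$ (i, j - 2*k2))
     else if i < 2*k1 then (if j < k2 then (if a then 1 else 0) else if j < 2*k2 then (if a then 0 else 1)
                     else X2 $$ (i - k1, j - 2*k2))
     else (if j < k2 then X3 $$ (i - 2*k1, j) else if j < 2*k2 then X4 $$ (i - 2*k1, j - k2)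
           else Y $$ (i - 2*k1, j - 2*k2)))"

end

theory Submission imports Defs begin
abbreviation pinv :: "(nat \<Rightarrow> nat) \<Rightarrow> nat \<Rightarrow> nat" where "pinv p \<equiv> inv_into UNIV p"

lemma perm_lt: "(p::nat\<Rightarrow>nat) permutes {..<n} \<Longrightarrow> (i::nat) < n \<Longrightarrow> p i < n"
  using permutes_in_image by fastforce

lemma inv_lt: "p permutes {..<n} \<Longrightarrow> i < n \<Longrightarrow> pinv p i < n"
  using perm_lt permutes_inv by blast

lemma left_entry:
  assumes "p permutes {..<n}" "A \<in> carrier_mat n m" "i < n" "j < m"
  shows "(perm_mat n p * A) $$ (i,j) = A $$ (p i, j)"
proof -
  have "(perm_mat n p * A) $$ (i,j) = (\<Sum>l\<in>{0..<n}. (if p i = l then 1 else 0) * A $$ (l,j))"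
    using assms by (simp add: perm_mat_def scalar_prod_def)
  also have "\<dots> = (\<Sum>l\<in>{0..<n}. if l = p i then A $$ (l,j) else 0)"
    by (rule sum.cong) auto
  also have "\<dots> = A $$ (p i, j)" using perm_lt[OF assms(1,3)] by simp
  finally show ?thesis .
qed

lemma right_entry:
  assumes "q permutes {..<m}" "A \<in> carrier_mat n m" "i < n" "j < m"
  shows "(A * perm_mat m q) $$ (i,j) = A $$ (i, pinv q j)"
proof -
  have "(A * perm_mat m q) $$ (i,j) = (\<Sum>l\<in>{0..<m}. A $$ (i,l) * (if q l = j then 1 else 0))"
    using assms by (simp add: perm_mat_def scalar_prod_def)
  also have "\<dots> = (\<Sum>l\<in>{0..<m}. if l = pinv q j then A $$ (i,l) else 0)"
    apply (rule sum.cong) 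
    using assms(1) by (auto simp: permutes_inverses(1,2))  
  also have "\<dots> = A $$ (i, pinv q j)" using inv_lt[OF assms(1,4)] by simp
  finally show ?thesis .
qed

lemma pm_entry:
  assumes "p permutes {..<n}" "q permutes {..<m}" "A \<in> carrier_mat n m" "i < n" "j < m"
  shows "(perm_mat n p * A * perm_mat m q) $$ (i,j) = A $$ (p i, pinv q j)"
proof -
  have c: "perm_mat n p * A \<in> carrier_mat n m"
    using mult_carrier_mat[of "perm_mat n p" n n A m] assms(3) by (simp add: perm_mat_def)
  show ?thesis using right_entry[OF assms(2) c assms(4,5)] left_entry[OF assms(1,3,4)] inv_lt[OF assms(2,5)]
    by simp
qed

lemma pm_dims: "dim_row (perm_mat n p * A * perm_mat m q) = n" "dim_col (perm_mat n p * A * perm_mat m q) = m"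
  by (auto simp: perm_mat_def)

lemma transpose_pm:
  assumes "p permutes {..<n}"
  shows "(perm_mat n p)\<^sup>T = perm_mat n (pinv p)"
  apply (rule eq_matI)
  using assms by (auto simp: perm_mat_def permutes_inverses)

lemma permutes_from_inj:
  assumes "finite S" "\<forall>x\<in>S. f x \<in> S" "inj_on f S" "\<forall>x. x \<notin> S \<longrightarrow> f x = x"
  shows "f permutes S"
proof -
  have "f ` S = S" using endo_inj_surj[OF assms(1) _ assms(3)] assms(2) by blast
  then have "bij_betw f S S" using assms(3) by (simp add: bij_betw_def)
  then show ?thesis using assms(4) bij_imp_permutes by blast
qed

definition dg3 :: "nat \<Rightarrow> (nat \<Rightarrow> nat) \<Rightarrow> (nat \<Rightarrow> nat) \<Rightarrow> (nat \<Rightarrow> nat) \<Rightarrow> nat \<Rightarrow> nat \<Rightarrow> nat" where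
  "dg3 a f g h c i = (if i < a then f i else if i < 2*a then a + g (i - a)
     else if i < 2*a + c then 2*a + h (i - 2*a) else i)"

definition sw3 :: "nat \<Rightarrow> (nat \<Rightarrow> nat) \<Rightarrow> (nat \<Rightarrow> nat) \<Rightarrow> (nat \<Rightarrow> nat) \<Rightarrow> nat \<Rightarrow> nat \<Rightarrow> nat" where
  "sw3 a f g h c i = (if i < a then a + f i else if i < 2*a then g (i - a)
     else if i < 2*a + c then 2*a + h (i - 2*a) else i)"

lemma perm_inj: "p permutes S \<Longrightarrow> p x = p y \<longleftrightarrow> x = y"
  by (meson permutes_inj injD)

lemma dg3_permutes:
  assumes f: "f permutes {..<a}" and g: "g permutes {..<a}" and h: "h permutes {..<c}"
  shows "dg3 a f g h c permutes {..<2*a+c}"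
proof (rule permutes_from_inj)
  note lt = perm_lt[OF f] perm_lt[OF g] perm_lt[OF h]
  show "\<forall>x\<in>{..<2 * a + c}. dg3 a f g h c x \<in> {..<2 * a + c}"
  proof
    fix x assume "x \<in> {..<2*a+c}"
    then show "dg3 a f g h c x \<in> {..<2*a+c}"
    proof -
      have x: "x < 2*a+c" using \<open>x \<in> {..<2*a+c}\<close> by simp
      consider "x < a" | "a \<le> x" "x < 2*a" | "2*a \<le> x" by linarith
      then show ?thesis
      proof cases
        case 1 then show ?thesis using lt(1)[of x] by (simp add: dg3_def)
      next
        case 2 then have "x - a < a" by linarith
        then show ?thesis using lt(2)[of "x-a"] 2 by (simp add: dg3_def)
      next
        case 3 then have "x - 2*a < c" using x by linarith
        then show ?thesis using lt(3)[of "x-2*a"] 3 x by (simp add: dg3_def)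
      qed
    qed
  qed
  show "inj_on (dg3 a f g h c) {..<2 * a + c}"
  proof (rule inj_onI)
    fix x y assume x: "x \<in> {..<2 * a + c}" and y: "y \<in> {..<2 * a + c}"
      and e: "dg3 a f g h c x = dg3 a f g h c y"
    have x': "x < 2*a+c" and y': "y < 2*a+c" using x y by auto
    consider "x < a" | "a \<le> x" "x < 2*a" | "2*a \<le> x" by linarith
    then show "x = y"
    proof cases
      case 1 note cx = this
      have rx: "f (x) < a" using lt(1)[of "x"] cx x' by linarith
      consider "y < a" | "a \<le> y" "y < 2*a" | "2*a \<le> y" by linarith
      then show ?thesis
      proof cases
        case 1 note cy = this
        have ry: "f (y) < a" using lt(1)[of "y"] cy y' by linarith
        from e have "f (x) = f (y)" using cx cy x' y' by (simp add: dg3_def split: if_splits)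
        then have "x = y" using perm_inj[OF f] by blast
        then show ?thesis using cx cy by linarith
      next
        case 2 note cy = this
        have ry: "g (y - a) < a" using lt(2)[of "y - a"] cy y' by linarith
        from e show ?thesis using rx ry x' y' cx cy by (simp add: dg3_def split: if_splits)
      next
        case 3 note cy = this
        have ry: "h (y - 2*a) < c" using lt(3)[of "y - 2*a"] cy y' by linarith
        from e show ?thesis using rx ry x' y' cx cy by (simp add: dg3_def split: if_splits)
      qed
    next
      case 2 note cx = this
      have rx: "g (x - a) < a" using lt(2)[of "x - a"] cx x' by linarith
      consider "y < a" | "a \<le> y" "y < 2*a" | "2*a \<le> y" by linarith
      then show ?thesis
      proof cases
        case 1 note cy = this
        have ry: "f (y) < a" using lt(1)[of "y"] cy y' by linarith
        from e show ?thesis using rx ry x' y' cx cy by (simp add: dg3_def split: if_splits)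
      next
        case 2 note cy = this
        have ry: "g (y - a) < a" using lt(2)[of "y - a"] cy y' by linarith
        from e have "g (x - a) = g (y - a)" using cx cy x' y' by (simp add: dg3_def split: if_splits)
        then have "x - a = y - a" using perm_inj[OF g] by blast
        then show ?thesis using cx cy by linarith
      next
        case 3 note cy = this
        have ry: "h (y - 2*a) < c" using lt(3)[of "y - 2*a"] cy y' by linarith
        from e show ?thesis using rx ry x' y' cx cy by (simp add: dg3_def split: if_splits)
      qed
    next
      case 3 note cx = this
      have rx: "h (x - 2*a) < c" using lt(3)[of "x - 2*a"] cx x' by linarith
      consider "y < a" | "a \<le> y" "y < 2*a" | "2*a \<le> y" by linarith
      then show ?thesis
      proof cases
        case 1 note cy = this
        have ry: "f (y) < a" using lt(1)[of "y"] cy y' by linarith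
        from e show ?thesis using rx ry x' y' cx cy by (simp add: dg3_def split: if_splits)
      next
        case 2 note cy = this
        have ry: "g (y - a) < a" using lt(2)[of "y - a"] cy y' by linarith
        from e show ?thesis using rx ry x' y' cx cy by (simp add: dg3_def split: if_splits)
      next
        case 3 note cy = this
        have ry: "h (y - 2*a) < c" using lt(3)[of "y - 2*a"] cy y' by linarith
        from e have "h (x - 2*a) = h (y - 2*a)" using cx cy x' y' by (simp add: dg3_def split: if_splits)
        then have "x - 2*a = y - 2*a" using perm_inj[OF h] by blast
        then show ?thesis using cx cy by linarith
      qed
    qed
  qed
qed (auto simp: dg3_def)

lemma sw3_permutes:
  assumes f: "f permutes {..<a}" and g: "g permutes {..<a}" and h: "h permutes {..<c}"
  shows "sw3 a f g h c permutes {..<2*a+c}"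
proof (rule permutes_from_inj)
  note lt = perm_lt[OF f] perm_lt[OF g] perm_lt[OF h]
  show "\<forall>x\<in>{..<2 * a + c}. sw3 a f g h c x \<in> {..<2 * a + c}"
  proof
    fix x assume "x \<in> {..<2*a+c}"
    then show "sw3 a f g h c x \<in> {..<2*a+c}"
    proof -
      have x: "x < 2*a+c" using \<open>x \<in> {..<2*a+c}\<close> by simp
      consider "x < a" | "a \<le> x" "x < 2*a" | "2*a \<le> x" by linarith
      then show ?thesis
      proof cases
        case 1 then show ?thesis using lt(1)[of x] by (simp add: sw3_def)
      next
        case 2 then have "x - a < a" by linarith
        then show ?thesis using lt(2)[of "x-a"] 2 by (simp add: sw3_def)
      next
        case 3 then have "x - 2*a < c" using x by linarith
        then show ?thesis using lt(3)[of "x-2*a"] 3 x by (simp add: sw3_def)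
      qed
    qed
  qed
  show "inj_on (sw3 a f g h c) {..<2 * a + c}"
  proof (rule inj_onI)
    fix x y assume x: "x \<in> {..<2 * a + c}" and y: "y \<in> {..<2 * a + c}"
      and e: "sw3 a f g h c x = sw3 a f g h c y"
    have x': "x < 2*a+c" and y': "y < 2*a+c" using x y by auto
    consider "x < a" | "a \<le> x" "x < 2*a" | "2*a \<le> x" by linarith
    then show "x = y"
    proof cases
      case 1 note cx = this
      have rx: "f (x) < a" using lt(1)[of "x"] cx x' by linarith
      consider "y < a" | "a \<le> y" "y < 2*a" | "2*a \<le> y" by linarith
      then show ?thesis
      proof cases
        case 1 note cy = this
        have ry: "f (y) < a" using lt(1)[of "y"] cy y' by linarith
        from e have "f (x) = f (y)" using cx cy x' y' by (simp add: sw3_def split: if_splits)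
        then have "x = y" using perm_inj[OF f] by blast
        then show ?thesis using cx cy by linarith
      next
        case 2 note cy = this
        have ry: "g (y - a) < a" using lt(2)[of "y - a"] cy y' by linarith
        from e show ?thesis using rx ry x' y' cx cy by (simp add: sw3_def split: if_splits)
      next
        case 3 note cy = this
        have ry: "h (y - 2*a) < c" using lt(3)[of "y - 2*a"] cy y' by linarith
        from e show ?thesis using rx ry x' y' cx cy by (simp add: sw3_def split: if_splits)
      qed
    next
      case 2 note cx = this
      have rx: "g (x - a) < a" using lt(2)[of "x - a"] cx x' by linarith
      consider "y < a" | "a \<le> y" "y < 2*a" | "2*a \<le> y" by linarith
      then show ?thesis
      proof cases
        case 1 note cy = this
        have ry: "f (y) < a" using lt(1)[of "y"] cy y' by linarith
        from e show ?thesis using rx ry x' y' cx cy by (simp add: sw3_def split: if_splits)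
      next
        case 2 note cy = this
        have ry: "g (y - a) < a" using lt(2)[of "y - a"] cy y' by linarith
        from e have "g (x - a) = g (y - a)" using cx cy x' y' by (simp add: sw3_def split: if_splits)
        then have "x - a = y - a" using perm_inj[OF g] by blast
        then show ?thesis using cx cy by linarith
      next
        case 3 note cy = this
        have ry: "h (y - 2*a) < c" using lt(3)[of "y - 2*a"] cy y' by linarith
        from e show ?thesis using rx ry x' y' cx cy by (simp add: sw3_def split: if_splits)
      qed
    next
      case 3 note cx = this
      have rx: "h (x - 2*a) < c" using lt(3)[of "x - 2*a"] cx x' by linarith
      consider "y < a" | "a \<le> y" "y < 2*a" | "2*a \<le> y" by linarith
      then show ?thesis
      proof cases
        case 1 note cy = this
        have ry: "f (y) < a" using lt(1)[of "y"] cy y' by linarith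
        from e show ?thesis using rx ry x' y' cx cy by (simp add: sw3_def split: if_splits)
      next
        case 2 note cy = this
        have ry: "g (y - a) < a" using lt(2)[of "y - a"] cy y' by linarith
        from e show ?thesis using rx ry x' y' cx cy by (simp add: sw3_def split: if_splits)
      next
        case 3 note cy = this
        have ry: "h (y - 2*a) < c" using lt(3)[of "y - 2*a"] cy y' by linarith
        from e have "h (x - 2*a) = h (y - 2*a)" using cx cy x' y' by (simp add: sw3_def split: if_splits)
        then have "x - 2*a = y - 2*a" using perm_inj[OF h] by blast
        then show ?thesis using cx cy by linarith
      qed
    qed
  qed
qed (auto simp: sw3_def)

lemma pm_eq_entry:
  assumes "Z2 = perm_mat n p * Z1 * perm_mat m q" "p permutes {..<n}" "q permutes {..<m}"
    "Z1 \<in> carrier_mat n m" "i < n" "j < m"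
  shows "Z2 $$ (i,j) = Z1 $$ (p i, pinv q j)"
  using pm_entry[OF assms(2-6)] assms(1) by simp

lemma pinv_pinv: "p permutes S \<Longrightarrow> pinv (pinv p) = p"
  by (simp add: inv_inv_eq permutes_bij)

lemma get_perm: "is_perm_mat n P \<Longrightarrow> \<exists>p. p permutes {..<n} \<and> P = perm_mat n p"
  by (simp add: is_perm_mat_def)

lemma R_setD: "(a,b,c) \<in> R_set Z1 Z2 \<Longrightarrow> is_perm_mat (dim_row Z1) a \<and> is_perm_mat (dim_row Z1) b \<and> is_perm_mat (dim_col Z1) c \<and> Z2 = a*Z1*c \<and> Z1 = b*Z2*c"
  unfolding R_set_def mem_Collect_eq prod.case by assumption
lemma L_setD: "(a,b,c) \<in> L_set Z1 Z2 \<Longrightarrow> is_perm_mat (dim_row Z1) a \<and> is_perm_mat (dim_col Z1) b \<and> is_perm_mat (dim_col Z1) c \<and> Z1 = a*Z1*b \<and> Z2 = a*Z2*c"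
  unfolding L_set_def mem_Collect_eq prod.case by assumption

lemma core:
  assumes c1: "X1 \<in> carrier_mat k1 (dim_col Y)" and c2: "X2 \<in> carrier_mat k1 (dim_col Y)"
    and c3: "X3 \<in> carrier_mat (dim_row Y) k2" and c4: "X4 \<in> carrier_mat (dim_row Y) k2"
    and fx: "fixable X1 X2 X3 X4 Y"
  shows "\<exists>rf cf. rf permutes {..<2*k1 + dim_row Y} \<and> cf permutes {..<2*k2 + dim_col Y} \<and>
    (\<forall>i j. i < 2*k1 + dim_row Y \<longrightarrow> j < 2*k2 + dim_col Y \<longrightarrow>
       block_mat3 False k1 k2 X1 X2 X3 X4 Y $$ (i,j) = block_mat3 True k1 k2 X1 X2 X3 X4 Y $$ (rf i, cf j))"
proof -
  define r where "r = dim_row Y"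
  define c where "c = dim_col Y"
  have cY: "Y \<in> carrier_mat r c" by (simp add: r_def c_def)
  note c1 = c1[folded c_def] and c2 = c2[folded c_def] and c3 = c3[folded r_def] and c4 = c4[folded r_def]
  obtain P Q where PP: "is_perm_mat r P" and QQ: "is_perm_mat c Q" and YPQ: "Y = P * Y * Q" and
    disj: "(\<exists>P1 P2 Q3 Q4. (P1,P2,Q) \<in> R_set X1 X2 \<and> (P,Q3,Q4) \<in> L_set X3 X4) \<or>
        (\<exists>P1 P2 Q3 Q4. (Q3,Q4,P\<^sup>T) \<in> R_set X3\<^sup>T X4\<^sup>T \<and> (Q\<^sup>T,P1,P2) \<in> L_set X1\<^sup>T X2\<^sup>T)"
    using fx unfolding fixable_def r_def c_def by blast
  obtain p where p: "p permutes {..<r}" and Pp: "P = perm_mat r p" using get_perm[OF PP] by blast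
  obtain q where q: "q permutes {..<c}" and Qq: "Q = perm_mat c q" using get_perm[OF QQ] by blast
  have Yf: "Y $$ (i,j) = Y $$ (p i, pinv q j)" if "i < r" "j < c" for i j
    using pm_eq_entry[OF YPQ[unfolded Pp Qq] p q cY that] .
  have qi: "pinv q permutes {..<c}" using q by (rule permutes_inv)
  note lt_p = perm_lt[OF p] and lt_q = perm_lt[OF q] and lt_qi = perm_lt[OF qi]
  from disj show ?thesis
  proof
    assume "\<exists>P1 P2 Q3 Q4. (P1,P2,Q) \<in> R_set X1 X2 \<and> (P,Q3,Q4) \<in> L_set X3 X4"
    then obtain P1 P2 Q3 Q4 where m1: "(P1,P2,Q) \<in> R_set X1 X2" and m2: "(P,Q3,Q4) \<in> L_set X3 X4" by blast
    note rl = R_setD[OF m1] L_setD[OF m2]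
    note pm = rl(1)[THEN conjunct1] rl(1)[THEN conjunct2, THEN conjunct1] rl(2)[THEN conjunct2, THEN conjunct1] rl(2)[THEN conjunct2, THEN conjunct2, THEN conjunct1]
    note e2 = rl(1)[THEN conjunct2, THEN conjunct2, THEN conjunct2, THEN conjunct1] and e1 = rl(1)[THEN conjunct2, THEN conjunct2, THEN conjunct2, THEN conjunct2] and e3 = rl(2)[THEN conjunct2, THEN conjunct2, THEN conjunct2, THEN conjunct1] and e4 = rl(2)[THEN conjunct2, THEN conjunct2, THEN conjunct2, THEN conjunct2]
    have dm: "dim_row X1 = k1" "dim_col X3 = k2" using c1 c3 by auto
    have pm1: "is_perm_mat k1 P1" and pm2: "is_perm_mat k1 P2" and pm3: "is_perm_mat k2 Q3" and pm4: "is_perm_mat k2 Q4"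
      using pm(1-4) unfolding dm .
    obtain p1 where p1: "p1 permutes {..<k1}" "P1 = perm_mat k1 p1" using get_perm[OF pm1] by blast
    obtain p2 where p2: "p2 permutes {..<k1}" "P2 = perm_mat k1 p2" using get_perm[OF pm2] by blast
    obtain q3 where q3: "q3 permutes {..<k2}" "Q3 = perm_mat k2 q3" using get_perm[OF pm3] by blast
    obtain q4 where q4: "q4 permutes {..<k2}" "Q4 = perm_mat k2 q4" using get_perm[OF pm4] by blast
    have X2f: "X2 $$ (i,j) = X1 $$ (p1 i, pinv q j)" if "i < k1" "j < c" for i j
      using pm_eq_entry[OF e2[unfolded p1(2) Qq] p1(1) q c1 that] .
    have X1f: "X1 $$ (i,j) = X2 $$ (p2 i, pinv q j)" if "i < k1" "j < c" for i j
      using pm_eq_entry[OF e1[unfolded p2(2) Qq] p2(1) q c2 that] .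
    have X3f: "X3 $$ (i,j) = X3 $$ (p i, pinv q3 j)" if "i < r" "j < k2" for i j
      using pm_eq_entry[OF e3[unfolded q3(2) Pp] p q3(1) c3 that] .
    have X4f: "X4 $$ (i,j) = X4 $$ (p i, pinv q4 j)" if "i < r" "j < k2" for i j
      using pm_eq_entry[OF e4[unfolded q4(2) Pp] p q4(1) c4 that] .
    have q3i: "pinv q3 permutes {..<k2}" using q3(1) by (rule permutes_inv)
    have q4i: "pinv q4 permutes {..<k2}" using q4(1) by (rule permutes_inv)
    note lt_p1 = perm_lt[OF p1(1)] and lt_p2 = perm_lt[OF p2(1)]
      and lt_q3i = perm_lt[OF q3i] and lt_q4i = perm_lt[OF q4i]
    define RF where "RF = sw3 k1 p2 p1 p r"
    define CF where "CF = dg3 k2 (pinv q3) (pinv q4) (pinv q) c"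
    have RFp: "RF permutes {..<2*k1+r}" unfolding RF_def by (rule sw3_permutes[OF p2(1) p1(1) p])
    have CFp: "CF permutes {..<2*k2+c}" unfolding CF_def by (rule dg3_permutes[OF q3i q4i qi])
    note rbnd = RF_def and cbnd = CF_def
    have [simp]: "dim_row Y = r" "dim_col Y = c" by (simp_all add: r_def c_def)
    have main: "\<forall>i j. i < 2*k1 + r \<longrightarrow> j < 2*k2 + c \<longrightarrow> block_mat3 False k1 k2 X1 X2 X3 X4 Y $$ (i,j) = block_mat3 True k1 k2 X1 X2 X3 X4 Y $$ (RF i, CF j)"
    proof (intro allI impI)
      fix i j assume i: "i < 2*k1 + r" and j: "j < 2*k2 + c"
      consider "i < k1" | "k1 \<le> i" "i < 2*k1" | "2*k1 \<le> i" by linarith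
      then show "block_mat3 False k1 k2 X1 X2 X3 X4 Y $$ (i,j) = block_mat3 True k1 k2 X1 X2 X3 X4 Y $$ (RF i, CF j)"
      proof cases
        case 1 note ci = this
        consider "j < k2" | "k2 \<le> j" "j < 2*k2" | "2*k2 \<le> j" by linarith
        then show ?thesis
        proof cases
          case 1 note cj = this
          have ib: "i < k1" using ci i by linarith
          have jb: "j < k2" using cj j by linarith
          show ?thesis using ci cj i j rbnd cbnd lt_p2[OF ib] lt_q3i[OF jb] by (simp add: block_mat3_def dg3_def sw3_def)
        next
          case 2 note cj = this
          have ib: "i < k1" using ci i by linarith
          have jb: "j - k2 < k2" using cj j by linarith
          show ?thesis using ci cj i j rbnd cbnd lt_p2[OF ib] lt_q4i[OF jb] by (simp add: block_mat3_def dg3_def sw3_def)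
        next
          case 3 note cj = this
          have ib: "i < k1" using ci i by linarith
          have jb: "j - 2*k2 < c" using cj j by linarith
          show ?thesis using ci cj i j rbnd cbnd lt_p2[OF ib] lt_qi[OF jb] X1f[OF ib jb] by (simp add: block_mat3_def dg3_def sw3_def)
        qed
      next
        case 2 note ci = this
        consider "j < k2" | "k2 \<le> j" "j < 2*k2" | "2*k2 \<le> j" by linarith
        then show ?thesis
        proof cases
          case 1 note cj = this
          have ib: "i - k1 < k1" using ci i by linarith
          have jb: "j < k2" using cj j by linarith
          show ?thesis using ci cj i j rbnd cbnd lt_p1[OF ib] lt_q3i[OF jb] by (simp add: block_mat3_def dg3_def sw3_def)
        next
          case 2 note cj = this
          have ib: "i - k1 < k1" using ci i by linarith
          have jb: "j - k2 < k2" using cj j by linarith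
          show ?thesis using ci cj i j rbnd cbnd lt_p1[OF ib] lt_q4i[OF jb] by (simp add: block_mat3_def dg3_def sw3_def)
        next
          case 3 note cj = this
          have ib: "i - k1 < k1" using ci i by linarith
          have jb: "j - 2*k2 < c" using cj j by linarith
          show ?thesis using ci cj i j rbnd cbnd lt_p1[OF ib] lt_qi[OF jb] X2f[OF ib jb] by (simp add: block_mat3_def dg3_def sw3_def)
        qed
      next
        case 3 note ci = this
        consider "j < k2" | "k2 \<le> j" "j < 2*k2" | "2*k2 \<le> j" by linarith
        then show ?thesis
        proof cases
          case 1 note cj = this
          have ib: "i - 2*k1 < r" using ci i by linarith
          have jb: "j < k2" using cj j by linarith
          show ?thesis using ci cj i j rbnd cbnd lt_p[OF ib] lt_q3i[OF jb] X3f[OF ib jb] by (simp add: block_mat3_def dg3_def sw3_def)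
        next
          case 2 note cj = this
          have ib: "i - 2*k1 < r" using ci i by linarith
          have jb: "j - k2 < k2" using cj j by linarith
          show ?thesis using ci cj i j rbnd cbnd lt_p[OF ib] lt_q4i[OF jb] X4f[OF ib jb] by (simp add: block_mat3_def dg3_def sw3_def)
        next
          case 3 note cj = this
          have ib: "i - 2*k1 < r" using ci i by linarith
          have jb: "j - 2*k2 < c" using cj j by linarith
          show ?thesis using ci cj i j rbnd cbnd lt_p[OF ib] lt_qi[OF jb] Yf[OF ib jb] by (simp add: block_mat3_def dg3_def sw3_def)
        qed
      qed
    qed
    show ?thesis using RFp CFp main unfolding r_def c_def by blast
  next
    assume "\<exists>P1 P2 Q3 Q4. (Q3,Q4,P\<^sup>T) \<in> R_set X3\<^sup>T X4\<^sup>T \<and> (Q\<^sup>T,P1,P2) \<in> L_set X1\<^sup>T X2\<^sup>T"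
    then obtain P1 P2 Q3 Q4 where m1: "(Q3,Q4,P\<^sup>T) \<in> R_set X3\<^sup>T X4\<^sup>T" and m2: "(Q\<^sup>T,P1,P2) \<in> L_set X1\<^sup>T X2\<^sup>T" by blast
    note rl = R_setD[OF m1] L_setD[OF m2]
    note pm = rl(2)[THEN conjunct2, THEN conjunct1] rl(2)[THEN conjunct2, THEN conjunct2, THEN conjunct1] rl(1)[THEN conjunct1] rl(1)[THEN conjunct2, THEN conjunct1]
    note e4 = rl(1)[THEN conjunct2, THEN conjunct2, THEN conjunct2, THEN conjunct1] and e3 = rl(1)[THEN conjunct2, THEN conjunct2, THEN conjunct2, THEN conjunct2] and e1 = rl(2)[THEN conjunct2, THEN conjunct2, THEN conjunct2, THEN conjunct1] and e2 = rl(2)[THEN conjunct2, THEN conjunct2, THEN conjunct2, THEN conjunct2]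
    have dm: "dim_col X1\<^sup>T = k1" "dim_row X3\<^sup>T = k2" using c1 c3 by auto
    have pm1: "is_perm_mat k1 P1" and pm2: "is_perm_mat k1 P2" and pm3: "is_perm_mat k2 Q3" and pm4: "is_perm_mat k2 Q4"
      using pm(1-4) unfolding dm .
    obtain p1 where p1: "p1 permutes {..<k1}" "P1 = perm_mat k1 p1" using get_perm[OF pm1] by blast
    obtain p2 where p2: "p2 permutes {..<k1}" "P2 = perm_mat k1 p2" using get_perm[OF pm2] by blast
    obtain q3 where q3: "q3 permutes {..<k2}" "Q3 = perm_mat k2 q3" using get_perm[OF pm3] by blast
    obtain q4 where q4: "q4 permutes {..<k2}" "Q4 = perm_mat k2 q4" using get_perm[OF pm4] by blast
    have PT: "P\<^sup>T = perm_mat r (pinv p)" using transpose_pm[OF p] Pp by simp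
    have QT: "Q\<^sup>T = perm_mat c (pinv q)" using transpose_pm[OF q] Qq by simp
    have pi: "pinv p permutes {..<r}" using p by (rule permutes_inv)
    have X4f: "X4 $$ (i,j) = X3 $$ (p i, q3 j)" if "i < r" "j < k2" for i j
    proof -
      have "X4\<^sup>T $$ (j,i) = X3\<^sup>T $$ (q3 j, pinv (pinv p) i)"
        using pm_eq_entry[OF e4[unfolded q3(2) PT] q3(1) pi _ that(2,1)] c3 by simp
      then show ?thesis using that c3 c4 perm_lt[OF q3(1) that(2)] perm_lt[OF p that(1)] pinv_pinv[OF p] by simp
    qed
    have X3f: "X3 $$ (i,j) = X4 $$ (p i, q4 j)" if "i < r" "j < k2" for i j
    proof -
      have "X3\<^sup>T $$ (j,i) = X4\<^sup>T $$ (q4 j, pinv (pinv p) i)"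
        using pm_eq_entry[OF e3[unfolded q4(2) PT] q4(1) pi _ that(2,1)] c4 by simp
      then show ?thesis using that c3 c4 perm_lt[OF q4(1) that(2)] perm_lt[OF p that(1)] pinv_pinv[OF p] by simp
    qed
    have X1f: "X1 $$ (i,j) = X1 $$ (pinv p1 i, pinv q j)" if "i < k1" "j < c" for i j
    proof -
      have "X1\<^sup>T $$ (j,i) = X1\<^sup>T $$ (pinv q j, pinv p1 i)"
        using pm_eq_entry[OF e1[unfolded p1(2) QT] qi p1(1) _ that(2,1)] c1 by simp
      then show ?thesis using that c1 perm_lt[OF permutes_inv[OF p1(1)] that(1)] perm_lt[OF qi that(2)] by simp
    qed
    have X2f: "X2 $$ (i,j) = X2 $$ (pinv p2 i, pinv q j)" if "i < k1" "j < c" for i j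
    proof -
      have "X2\<^sup>T $$ (j,i) = X2\<^sup>T $$ (pinv q j, pinv p2 i)"
        using pm_eq_entry[OF e2[unfolded p2(2) QT] qi p2(1) _ that(2,1)] c2 by simp
      then show ?thesis using that c2 perm_lt[OF permutes_inv[OF p2(1)] that(1)] perm_lt[OF qi that(2)] by simp
    qed
    have p1i: "pinv p1 permutes {..<k1}" using p1(1) by (rule permutes_inv)
    have p2i: "pinv p2 permutes {..<k1}" using p2(1) by (rule permutes_inv)
    note lt_p1i = perm_lt[OF p1i] and lt_p2i = perm_lt[OF p2i]
      and lt_q3 = perm_lt[OF q3(1)] and lt_q4 = perm_lt[OF q4(1)]
    define RF where "RF = dg3 k1 (pinv p1) (pinv p2) p r"
    define CF where "CF = sw3 k2 q4 q3 (pinv q) c"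
    have RFp: "RF permutes {..<2*k1+r}" unfolding RF_def by (rule dg3_permutes[OF p1i p2i p])
    have CFp: "CF permutes {..<2*k2+c}" unfolding CF_def by (rule sw3_permutes[OF q4(1) q3(1) qi])
    note rbnd = RF_def and cbnd = CF_def
    have [simp]: "dim_row Y = r" "dim_col Y = c" by (simp_all add: r_def c_def)
    have main: "\<forall>i j. i < 2*k1 + r \<longrightarrow> j < 2*k2 + c \<longrightarrow> block_mat3 False k1 k2 X1 X2 X3 X4 Y $$ (i,j) = block_mat3 True k1 k2 X1 X2 X3 X4 Y $$ (RF i, CF j)"
    proof (intro allI impI)
      fix i j assume i: "i < 2*k1 + r" and j: "j < 2*k2 + c"
      consider "i < k1" | "k1 \<le> i" "i < 2*k1" | "2*k1 \<le> i" by linarith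
      then show "block_mat3 False k1 k2 X1 X2 X3 X4 Y $$ (i,j) = block_mat3 True k1 k2 X1 X2 X3 X4 Y $$ (RF i, CF j)"
      proof cases
        case 1 note ci = this
        consider "j < k2" | "k2 \<le> j" "j < 2*k2" | "2*k2 \<le> j" by linarith
        then show ?thesis
        proof cases
          case 1 note cj = this
          have ib: "i < k1" using ci i by linarith
          have jb: "j < k2" using cj j by linarith
          show ?thesis using ci cj i j rbnd cbnd lt_p1i[OF ib] lt_q4[OF jb] by (simp add: block_mat3_def dg3_def sw3_def)
        next
          case 2 note cj = this
          have ib: "i < k1" using ci i by linarith
          have jb: "j - k2 < k2" using cj j by linarith
          show ?thesis using ci cj i j rbnd cbnd lt_p1i[OF ib] lt_q3[OF jb] by (simp add: block_mat3_def dg3_def sw3_def)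
        next
          case 3 note cj = this
          have ib: "i < k1" using ci i by linarith
          have jb: "j - 2*k2 < c" using cj j by linarith
          show ?thesis using ci cj i j rbnd cbnd lt_p1i[OF ib] lt_qi[OF jb] X1f[OF ib jb] by (simp add: block_mat3_def dg3_def sw3_def)
        qed
      next
        case 2 note ci = this
        consider "j < k2" | "k2 \<le> j" "j < 2*k2" | "2*k2 \<le> j" by linarith
        then show ?thesis
        proof cases
          case 1 note cj = this
          have ib: "i - k1 < k1" using ci i by linarith
          have jb: "j < k2" using cj j by linarith
          show ?thesis using ci cj i j rbnd cbnd lt_p2i[OF ib] lt_q4[OF jb] by (simp add: block_mat3_def dg3_def sw3_def)
        next
          case 2 note cj = this
          have ib: "i - k1 < k1" using ci i by linarith
          have jb: "j - k2 < k2" using cj j by linarith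
          show ?thesis using ci cj i j rbnd cbnd lt_p2i[OF ib] lt_q3[OF jb] by (simp add: block_mat3_def dg3_def sw3_def)
        next
          case 3 note cj = this
          have ib: "i - k1 < k1" using ci i by linarith
          have jb: "j - 2*k2 < c" using cj j by linarith
          show ?thesis using ci cj i j rbnd cbnd lt_p2i[OF ib] lt_qi[OF jb] X2f[OF ib jb] by (simp add: block_mat3_def dg3_def sw3_def)
        qed
      next
        case 3 note ci = this
        consider "j < k2" | "k2 \<le> j" "j < 2*k2" | "2*k2 \<le> j" by linarith
        then show ?thesis
        proof cases
          case 1 note cj = this
          have ib: "i - 2*k1 < r" using ci i by linarith
          have jb: "j < k2" using cj j by linarith
          show ?thesis using ci cj i j rbnd cbnd lt_p[OF ib] lt_q4[OF jb] X3f[OF ib jb] by (simp add: block_mat3_def dg3_def sw3_def)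
        next
          case 2 note cj = this
          have ib: "i - 2*k1 < r" using ci i by linarith
          have jb: "j - k2 < k2" using cj j by linarith
          show ?thesis using ci cj i j rbnd cbnd lt_p[OF ib] lt_q3[OF jb] X4f[OF ib jb] by (simp add: block_mat3_def dg3_def sw3_def)
        next
          case 3 note cj = this
          have ib: "i - 2*k1 < r" using ci i by linarith
          have jb: "j - 2*k2 < c" using cj j by linarith
          show ?thesis using ci cj i j rbnd cbnd lt_p[OF ib] lt_qi[OF jb] Yf[OF ib jb] by (simp add: block_mat3_def dg3_def sw3_def)
        qed
      qed
    qed
    show ?thesis using RFp CFp main unfolding r_def c_def by blast
  qed
qed

theorem proposition6p1:
  fixes A B :: "real mat"
  assumes "gram_mates A B"
    and "mat_rank (A - B) = 1"
    and "is_perm_mat (dim_row A) P0" and "is_perm_mat (dim_col A) Q0"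
    and "k1 > 0" and "k2 > 0"
    and "X1 \<in> carrier_mat k1 (dim_col Y)" and "X2 \<in> carrier_mat k1 (dim_col Y)"
    and "X3 \<in> carrier_mat (dim_row Y) k2" and "X4 \<in> carrier_mat (dim_row Y) k2"
    and "P0 * A * Q0 = block_mat3 True k1 k2 X1 X2 X3 X4 Y"
    and "P0 * B * Q0 = block_mat3 False k1 k2 X1 X2 X3 X4 Y"
    and "X1\<^sup>T *\<^sub>v vec k1 (\<lambda>_. 1) = X2\<^sup>T *\<^sub>v vec k1 (\<lambda>_. 1)"
    and "X3 *\<^sub>v vec k2 (\<lambda>_. 1) = X4 *\<^sub>v vec k2 (\<lambda>_. 1)"
    and "fixable X1 X2 X3 X4 Y"
  shows "mat_isomorphic A B"
proof -
  define n where "n = dim_row A"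
  define m where "m = dim_col A"
  obtain p0 where p0: "p0 permutes {..<n}" and P0: "P0 = perm_mat n p0"
    using get_perm[OF assms(3)] unfolding n_def by blast
  obtain q0 where q0: "q0 permutes {..<m}" and Q0: "Q0 = perm_mat m q0"
    using get_perm[OF assms(4)] unfolding m_def by blast
  have cA: "A \<in> carrier_mat n m" by (simp add: n_def m_def)
  have cB: "B \<in> carrier_mat n m" using assms(1) by (simp add: n_def m_def gram_mates_def)
  define A' where "A' = block_mat3 True k1 k2 X1 X2 X3 X4 Y"
  define B' where "B' = block_mat3 False k1 k2 X1 X2 X3 X4 Y"
  have eA: "A' = perm_mat n p0 * A * perm_mat m q0" using assms(11) P0 Q0 A'_def by simp
  have eB: "B' = perm_mat n p0 * B * perm_mat m q0" using assms(12) P0 Q0 B'_def by simp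
  have "dim_row A' = n" "dim_col A' = m" unfolding eA by (simp_all add: perm_mat_def)
  then have nd: "n = 2*k1 + dim_row Y" and md: "m = 2*k2 + dim_col Y"
    unfolding A'_def block_mat3_def by simp_all
  obtain RF CF where RF: "RF permutes {..<n}" and CF: "CF permutes {..<m}"
    and main: "\<forall>i j. i < n \<longrightarrow> j < m \<longrightarrow> B' $$ (i,j) = A' $$ (RF i, CF j)"
    using core[OF assms(7-10,15)] unfolding nd md A'_def B'_def by blast
  have Aent: "A' $$ (i,j) = A $$ (p0 i, pinv q0 j)" if "i < n" "j < m" for i j
    using pm_eq_entry[OF eA p0 q0 cA that] .
  have Bent: "B' $$ (i,j) = B $$ (p0 i, pinv q0 j)" if "i < n" "j < m" for i j
    using pm_eq_entry[OF eB p0 q0 cB that] .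
  define pp where "pp = p0 \<circ> RF \<circ> pinv p0"
  define qq where "qq = pinv q0 \<circ> CF \<circ> q0"
  have pp: "pp permutes {..<n}" unfolding pp_def
    by (intro permutes_compose permutes_inv p0 RF)
  have qq: "qq permutes {..<m}" unfolding qq_def
    by (intro permutes_compose permutes_inv q0 CF)
  have qqi: "pinv qq permutes {..<m}" using qq by (rule permutes_inv)
  have "B = perm_mat n pp * A * perm_mat m (pinv qq)"
  proof (rule eq_matI)
    fix i j assume i: "i < dim_row (perm_mat n pp * A * perm_mat m (pinv qq))"
      and j: "j < dim_col (perm_mat n pp * A * perm_mat m (pinv qq))"
    then have i: "i < n" and j: "j < m" by (simp_all add: pm_dims perm_mat_def)
    have rhs: "(perm_mat n pp * A * perm_mat m (pinv qq)) $$ (i,j) = A $$ (pp i, qq j)"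
      using pm_entry[OF pp qqi cA i j] pinv_pinv[OF qq] by simp
    have i': "pinv p0 i < n" using inv_lt[OF p0 i] .
    have j': "q0 j < m" using perm_lt[OF q0 j] .
    have "B $$ (i,j) = B $$ (p0 (pinv p0 i), pinv q0 (q0 j))"
      using permutes_inverses[OF p0] permutes_inverses[OF q0] by simp
    also have "\<dots> = B' $$ (pinv p0 i, q0 j)" using Bent[OF i' j'] by simp
    also have "\<dots> = A' $$ (RF (pinv p0 i), CF (q0 j))" using main i' j' by blast
    also have "\<dots> = A $$ (p0 (RF (pinv p0 i)), pinv q0 (CF (q0 j)))"
      using Aent[OF perm_lt[OF RF i'] perm_lt[OF CF j']] .
    also have "\<dots> = A $$ (pp i, qq j)" by (simp add: pp_def qq_def)
    finally show "B $$ (i,j) = (perm_mat n pp * A * perm_mat m (pinv qq)) $$ (i,j)"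
      using rhs by simp
  qed (use cB in \<open>simp_all add: perm_mat_def\<close>)
  then show ?thesis unfolding mat_isomorphic_def is_perm_mat_def n_def[symmetric] m_def[symmetric]
    using pp qqi by blast
qed

end
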